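(* Let $K$ be a finite simplicial complex, $f$ an injective filtration function on $K$, $n$ a positive integer, and $\alpha$ an $n$-cycle whose class $[\alpha]\in H_n(K^f_a)$ is born at $a$ and terminated at a finite value $b>a$. Let $D=(0,\frac{b-a}{2}]$, let $\sigma_1,\ldots,\sigma_m$ be the $(n+1)$-simplices of $K$ and let $\Pi_\varepsilon$ ($\varepsilon\in D$) be as in the context. Suppose $t\in D$ is a point of discontinuity of $\varepsilon\mapsto\Pi_\varepsilon$ (i.e. $\Pi_\varepsilon$ is not constant on any neighbourhood of $t$ in $D$). Then there exist $i\neq j$ such that $2t=|f(\sigma_i)-f(\sigma_j)|$.
   Context: A filtration function on a finite simplicial complex $K$ is a map $f\colon K\to\mathbb{R}$ with $f(\sigma)\le f(\tau)$ whenever $\sigma$ is a face of $\tau$. Sublevel complexes are $K^f_r=f^{-1}((-\infty,r])$; homology is with coefficients in a fixed field. For a nontrivial class $[\alpha]\in H_n(K^f_r)$, its birth is the infimum of $q\le r$ such that $[\alpha]$ is in the image of $H_n(K^f_q)\to H_n(K^f_r)$, and its termination scale is the infimum of $q\ge r$ such that $[\alpha]$ maps to $0$ in $H_n(K^f_q)$. $\|f-g\|_\infty=\max_{\sigma\in K}|f(\sigma)-g(\sigma)|$. An injective $\varepsilon$-perturbation of $f$ is an injective filtration function $g$ with $\|f-g\|_\infty\le\varepsilon$. Each injective filtration function $g$ induces a linear ordering of the $(n+1)$-simplices $\{\sigma_1,\dots,\sigma_m\}$ by increasing $g$-value, regarded as a permutation in $S_m$; $\Pi_\varepsilon$ is the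 set of all permutations so induced by injective $\varepsilon$-perturbations of $f$. *)

theory Defs
  imports "HOL-Analysis.Analysis" "HOL-Combinatorics.Permutations"
begin

text \<open>Abstract finite simplicial complexes: a simplex is a nonempty finite set of
vertices; a complex is closed under taking nonempty faces.  Vertices carry a linear
order, used to orient simplices.\<close>

definition simplicial_complex :: "'v set set \<Rightarrow> bool" where
  "simplicial_complex K \<longleftrightarrow>
     (\<forall>\<sigma>\<in>K. finite \<sigma> \<and> \<sigma> \<noteq> {}) \<and>
     (\<forall>\<sigma>\<in>K. \<forall>\<tau>. \<tau> \<subseteq> \<sigma> \<and> \<tau> \<noteq> {} \<longrightarrow> \<tau> \<in> K)"

definition filtration_function :: "'v set set \<Rightarrow> ('v set \<Rightarrow> real) \<Rightarrow> bool" where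
  "filtration_function K f \<longleftrightarrow> (\<forall>\<sigma>\<in>K. \<forall>\<tau>\<in>K. \<sigma> \<subseteq> \<tau> \<longrightarrow> f \<sigma> \<le> f \<tau>)"

definition sublevel :: "'v set set \<Rightarrow> ('v set \<Rightarrow> real) \<Rightarrow> real \<Rightarrow> 'v set set" where
  "sublevel K f r = {\<sigma>\<in>K. f \<sigma> \<le> r}"

definition simplices :: "'v set set \<Rightarrow> nat \<Rightarrow> 'v set set" where
  "simplices L n = {\<sigma>\<in>L. card \<sigma> = Suc n}"

text \<open>Simplicial n-chains of L with coefficients in a field 'k: functions on simplices
supported on the n-simplices of L (the orientation is the one induced by the vertex order).\<close>
definition chain :: "'v set set \<Rightarrow> nat \<Rightarrow> ('v set \<Rightarrow> 'k::field) \<Rightarrow> bool" where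
  "chain L n c \<longleftrightarrow> (\<forall>\<sigma>. c \<sigma> \<noteq> 0 \<longrightarrow> \<sigma> \<in> simplices L n)"

text \<open>Incidence number [\<sigma> : \<tau>] = (-1)^i if \<tau> is \<sigma> with its i-th vertex (in increasing
order, counting from 0) removed, and 0 otherwise.\<close>
definition incidence :: "'v::linorder set \<Rightarrow> 'v set \<Rightarrow> 'k::field" where
  "incidence \<sigma> \<tau> =
     (if \<exists>v\<in>\<sigma>. \<tau> = \<sigma> - {v}
      then (- 1) ^ card {x\<in>\<sigma>. x < (THE v. v \<in> \<sigma> \<and> \<tau> = \<sigma> - {v})}
      else 0)"

definition bdry :: "'v::linorder set set \<Rightarrow> ('v set \<Rightarrow> 'k::field) \<Rightarrow> ('v set \<Rightarrow> 'k)" where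
  "bdry K c = (\<lambda>\<tau>. \<Sum>\<sigma>\<in>K. c \<sigma> * incidence \<sigma> \<tau>)"

definition is_cycle :: "'v::linorder set set \<Rightarrow> nat \<Rightarrow> ('v set \<Rightarrow> 'k::field) \<Rightarrow> bool" where
  "is_cycle L n c \<longleftrightarrow> chain L n c \<and> bdry L c = (\<lambda>_. 0)"

definition is_boundary :: "'v::linorder set set \<Rightarrow> nat \<Rightarrow> ('v set \<Rightarrow> 'k::field) \<Rightarrow> bool" where
  "is_boundary L n c \<longleftrightarrow> (\<exists>d. chain L (Suc n) d \<and> bdry L d = c)"

text \<open>Birth of the class [\<alpha>] \<in> H_n(K^f_r): infimum of q \<le> r such that [\<alpha>] lies in the image
of H_n(K^f_q) \<rightarrow> H_n(K^f_r), i.e. \<alpha> is homologous in K^f_r to a cycle of K^f_q.\<close>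
definition birth :: "'v::linorder set set \<Rightarrow> ('v set \<Rightarrow> real) \<Rightarrow> nat \<Rightarrow> real \<Rightarrow> ('v set \<Rightarrow> 'k::field) \<Rightarrow> real" where
  "birth K f n r \<alpha> = Inf {q. q \<le> r \<and> (\<exists>\<beta>. is_cycle (sublevel K f q) n \<beta> \<and>
                                   is_boundary (sublevel K f r) n (\<alpha> - \<beta>))}"

text \<open>Set of scales q \<ge> r at which [\<alpha>] maps to 0 in H_n(K^f_q); the termination scale
is its infimum (finite iff the set is nonempty).\<close>
definition death_scales :: "'v::linorder set set \<Rightarrow> ('v set \<Rightarrow> real) \<Rightarrow> nat \<Rightarrow> real \<Rightarrow> ('v set \<Rightarrow> 'k::field) \<Rightarrow> real set" where
  "death_scales K f n r \<alpha> = {q. q \<ge> r \<and> is_boundary (sublevel K f q) n \<alpha>}"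

definition termination_scale :: "'v::linorder set set \<Rightarrow> ('v set \<Rightarrow> real) \<Rightarrow> nat \<Rightarrow> real \<Rightarrow> ('v set \<Rightarrow> 'k::field) \<Rightarrow> real" where
  "termination_scale K f n r \<alpha> = Inf (death_scales K f n r \<alpha>)"

definition inj_perturbation :: "'v set set \<Rightarrow> ('v set \<Rightarrow> real) \<Rightarrow> real \<Rightarrow> ('v set \<Rightarrow> real) \<Rightarrow> bool" where
  "inj_perturbation K f \<epsilon> g \<longleftrightarrow> filtration_function K g \<and> inj_on g K \<and>
     (\<forall>\<sigma>\<in>K. \<bar>f \<sigma> - g \<sigma>\<bar> \<le> \<epsilon>)"

text \<open>\<Pi>_\<epsilon>: with the (n+1)-simplices enumerated as s 0, ..., s (m-1), the permutations \<pi>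
of {..<m} such that s (\<pi> 0), ..., s (\<pi> (m-1)) lists them in increasing g-value, for some
injective \<epsilon>-perturbation g of f.\<close>
definition Pi_perm :: "'v set set \<Rightarrow> ('v set \<Rightarrow> real) \<Rightarrow> nat \<Rightarrow> (nat \<Rightarrow> 'v set) \<Rightarrow> real \<Rightarrow> (nat \<Rightarrow> nat) set" where
  "Pi_perm K f m s \<epsilon> = {\<pi>. \<pi> permutes {..<m} \<and>
     (\<exists>g. inj_perturbation K f \<epsilon> g \<and>
          (\<forall>i<m. \<forall>j<m. i < j \<longrightarrow> g (s (\<pi> i)) < g (s (\<pi> j))))}"

end

theory Submission
  imports Defs
begin

lemma Pi_perm_mono:
  assumes "e \<le> e'"
  shows "Pi_perm K f m s e \<subseteq> Pi_perm K f m s e'"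
  using assms unfolding Pi_perm_def inj_perturbation_def
  by (smt (verit, best) Collect_mono_iff)

lemma Pi_perm_shrink:
  fixes K :: "'v set set" and f :: "'v set \<Rightarrow> real"
  assumes finK: "finite K" and ff: "filtration_function K f"
    and sK: "\<forall>i<m. s i \<in> K" and sinj: "inj_on s {..<m}"
    and eps: "e > 0"
    and band: "\<forall>i<m. \<forall>j<m. i \<noteq> j \<longrightarrow> \<bar>f (s i) - f (s j)\<bar> < 2*e' \<longrightarrow> \<bar>f (s i) - f (s j)\<bar> < 2*e"
  shows "Pi_perm K f m s e' \<subseteq> Pi_perm K f m s e"
proof
  fix \<pi> assume "\<pi> \<in> Pi_perm K f m s e'"
  then obtain g' where perm: "\<pi> permutes {..<m}" and pg: "inj_perturbation K f e' g'"
    and ord: "\<forall>i<m. \<forall>j<m. i < j \<longrightarrow> g' (s (\<pi> i)) < g' (s (\<pi> j))"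
    unfolding Pi_perm_def by blast
  have gf: "filtration_function K g'" and ginj: "inj_on g' K" and gb: "\<forall>\<sigma>\<in>K. \<bar>f \<sigma> - g' \<sigma>\<bar> \<le> e'"
    using pg unfolding inj_perturbation_def by auto
  define S where "S = s ` {..<m}"
  have SK: "S \<subseteq> K" using sK S_def by auto
  have finS: "finite S" using S_def by auto
  have key: "f \<rho> - f \<tau> < 2*e" if kp: "\<rho> \<in> S" "\<tau> \<in> S" "g' \<rho> \<le> g' \<tau>" for \<rho> \<tau>
  proof (cases "\<rho> = \<tau>")
    case True then show ?thesis using eps by simp
  next
    case False
    obtain i j where ij: "i < m" "j < m" "\<rho> = s i" "\<tau> = s j" using kp(1,2) S_def by auto
    have "i \<noteq> j" using False ij by auto
    have "g' \<rho> \<noteq> g' \<tau>" using False ginj SK kp(1,2) by (meson inj_onD subsetD)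
    hence lt: "g' \<rho> < g' \<tau>" using kp(3) by simp
    have "\<bar>f \<rho> - g' \<rho>\<bar> \<le> e'" "\<bar>f \<tau> - g' \<tau>\<bar> \<le> e'" using gb SK kp by auto
    hence d: "f \<rho> - f \<tau> < 2*e'" using lt by linarith
    show ?thesis
    proof (cases "f \<rho> - f \<tau> \<le> 0")
      case True then show ?thesis using eps by simp
    next
      case False
      hence "\<bar>f (s i) - f (s j)\<bar> < 2*e'" using d ij by simp
      hence "\<bar>f (s i) - f (s j)\<bar> < 2*e" using band ij \<open>i \<noteq> j\<close> by blast
      then show ?thesis using ij by simp
    qed
  qed
  define U where "U \<sigma> = insert \<sigma> {\<rho>\<in>S. \<exists>\<tau>\<in>S. \<tau> \<subseteq> \<sigma> \<and> g' \<rho> \<le> g' \<tau>}" for \<sigma>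
  define A where "A \<sigma> = Max ((\<lambda>\<rho>. f \<rho> - e) ` U \<sigma>)" for \<sigma>
  have finU: "finite (U \<sigma>)" for \<sigma>
  proof (rule finite_subset[of _ "insert \<sigma> S"])
    show "U \<sigma> \<subseteq> insert \<sigma> S" unfolding U_def by auto
  qed (use finS in auto)
  have Ane: "(\<lambda>\<rho>. f \<rho> - e) ` U \<sigma> \<noteq> {}" for \<sigma> unfolding U_def by auto
  have P1: "f \<sigma> - e \<le> A \<sigma>" for \<sigma>
    unfolding A_def using finU by (intro Max_ge) (auto simp: U_def)
  have P2: "A \<sigma> < f \<sigma> + e" if "\<sigma> \<in> K" for \<sigma>
  proof -
    have "\<forall>\<rho>\<in>U \<sigma>. f \<rho> - e < f \<sigma> + e"
    proof
      fix \<rho> assume "\<rho> \<in> U \<sigma>"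
      show "f \<rho> - e < f \<sigma> + e"
      proof (cases "\<rho> = \<sigma>")
        case True then show ?thesis using eps by simp
      next
        case False
        then obtain \<tau> where t: "\<rho> \<in> S" "\<tau> \<in> S" "\<tau> \<subseteq> \<sigma>" "g' \<rho> \<le> g' \<tau>"
          using \<open>\<rho> \<in> U \<sigma>\<close> unfolding U_def by auto
        have "f \<tau> \<le> f \<sigma>" using ff t SK that unfolding filtration_function_def by auto
        moreover have "f \<rho> - f \<tau> < 2*e" using key t by auto
        ultimately show ?thesis by linarith
      qed
    qed
    then show ?thesis unfolding A_def using finU Ane by (simp add: Max_less_iff)
  qed
  have Amono: "A \<sigma> \<le> A \<sigma>'" if am: "\<forall>\<rho>\<in>U \<sigma>. \<exists>\<rho>'\<in>U \<sigma>'. f \<rho> \<le> f \<rho>'" for \<sigma> \<sigma>'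
  proof -
    have "\<forall>x\<in>(\<lambda>\<rho>. f \<rho> - e) ` U \<sigma>. x \<le> A \<sigma>'"
    proof
      fix x assume "x \<in> (\<lambda>\<rho>. f \<rho> - e) ` U \<sigma>"
      then obtain \<rho> where "\<rho> \<in> U \<sigma>" "x = f \<rho> - e" by auto
      then obtain \<rho>' where "\<rho>' \<in> U \<sigma>'" "f \<rho> \<le> f \<rho>'" using am by auto
      then have "f \<rho>' - e \<le> A \<sigma>'" unfolding A_def using finU by (intro Max_ge) auto
      then show "x \<le> A \<sigma>'" using \<open>x = f \<rho> - e\<close> \<open>f \<rho> \<le> f \<rho>'\<close> by linarith
    qed
    then show ?thesis unfolding A_def using finU Ane by (simp add: Max_le_iff)
  qed
  have P3: "A \<sigma> \<le> A \<sigma>'" if "\<sigma> \<in> K" "\<sigma>' \<in> K" "\<sigma> \<subseteq> \<sigma>'" for \<sigma> \<sigma>'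
  proof (rule Amono, rule ballI)
    fix \<rho> assume r: "\<rho> \<in> U \<sigma>"
    show "\<exists>\<rho>'\<in>U \<sigma>'. f \<rho> \<le> f \<rho>'"
    proof (cases "\<rho> = \<sigma>")
      case True
      have "f \<sigma> \<le> f \<sigma>'" using ff that unfolding filtration_function_def by auto
      then show ?thesis using True by (auto simp: U_def)
    next
      case False
      then have "\<rho> \<in> U \<sigma>'" using r that(3) unfolding U_def by blast
      then show ?thesis by auto
    qed
  qed
  have P4: "A \<sigma>1 \<le> A \<sigma>2" if "\<sigma>1 \<in> S" "\<sigma>2 \<in> S" "g' \<sigma>1 < g' \<sigma>2" for \<sigma>1 \<sigma>2
  proof (rule Amono, rule ballI)
    fix \<rho> assume r: "\<rho> \<in> U \<sigma>1"
    have "\<rho> \<in> U \<sigma>2"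
    proof (cases "\<rho> = \<sigma>1")
      case True then show ?thesis using that unfolding U_def by auto
    next
      case False
      then obtain \<tau> where t: "\<rho> \<in> S" "\<tau> \<in> S" "\<tau> \<subseteq> \<sigma>1" "g' \<rho> \<le> g' \<tau>"
        using r unfolding U_def by auto
      have "g' \<tau> \<le> g' \<sigma>1" using gf t SK that unfolding filtration_function_def by auto
      then show ?thesis using t that unfolding U_def by fastforce
    qed
    then show "\<exists>\<rho>'\<in>U \<sigma>2. f \<rho> \<le> f \<rho>'" by auto
  qed
  define c where "c = Min (insert 0 (g' ` K))"
  have c: "c \<le> g' \<sigma>" if "\<sigma> \<in> K" for \<sigma> unfolding c_def using finK that by auto
  define \<eta>0 where "\<eta>0 = Min (insert 1 ((\<lambda>\<sigma>. (f \<sigma> + e - A \<sigma>) / (g' \<sigma> - c + 1)) ` K))"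
  have \<eta>0pos: "\<eta>0 > 0" unfolding \<eta>0_def using finK P2 c
    by (auto simp: Min_gr_iff intro!: divide_pos_pos) (smt (verit) P2 c)
  have \<eta>0le: "\<eta>0 \<le> (f \<sigma> + e - A \<sigma>) / (g' \<sigma> - c + 1)" if "\<sigma> \<in> K" for \<sigma>
    unfolding \<eta>0_def using finK that by auto
  define Bd where "Bd = (\<lambda>(\<sigma>1, \<sigma>2). (A \<sigma>1 - A \<sigma>2) / (g' \<sigma>2 - g' \<sigma>1)) ` (K \<times> K)"
  have "finite Bd" unfolding Bd_def using finK by auto
  moreover have "infinite {0<..<\<eta>0}" using \<eta>0pos by simp
  ultimately obtain \<eta> where \<eta>: "\<eta> \<in> {0<..<\<eta>0}" "\<eta> \<notin> Bd"
    by (metis Diff_infinite_finite ex_in_conv finite.emptyI DiffE)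
  define g where "g \<sigma> = A \<sigma> + \<eta> * (g' \<sigma> - c)" for \<sigma>
  have "filtration_function K g"
    unfolding filtration_function_def g_def
  proof (intro ballI impI)
    fix \<sigma> \<tau> assume "\<sigma> \<in> K" "\<tau> \<in> K" "\<sigma> \<subseteq> \<tau>"
    then have "A \<sigma> \<le> A \<tau>" "g' \<sigma> \<le> g' \<tau>" using P3 gf unfolding filtration_function_def by auto
    then show "A \<sigma> + \<eta> * (g' \<sigma> - c) \<le> A \<tau> + \<eta> * (g' \<tau> - c)"
      using \<eta> by (smt (verit) greaterThanLessThan_iff mult_left_mono)
  qed
  moreover have "inj_on g K"
  proof (rule inj_onI, rule ccontr)
    fix x y assume xy: "x \<in> K" "y \<in> K" "g x = g y" "x \<noteq> y"
    have ne: "g' y - g' x \<noteq> 0" using ginj xy by (metis eq_iff_diff_eq_0 inj_on_def)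
    have "A x - A y = \<eta> * (g' y - g' x)" using xy(3) unfolding g_def by (simp add: algebra_simps)
    then have "\<eta> = (A x - A y) / (g' y - g' x)" using ne by (simp add: field_simps)
    then have "\<eta> \<in> Bd" unfolding Bd_def using xy by (auto intro!: image_eqI[where x="(x,y)"])
    then show False using \<eta> by auto
  qed
  moreover have "\<forall>\<sigma>\<in>K. \<bar>f \<sigma> - g \<sigma>\<bar> \<le> e"
  proof
    fix \<sigma> assume sK': "\<sigma> \<in> K"
    have h1: "0 \<le> \<eta> * (g' \<sigma> - c)" using \<eta> c[OF sK'] by auto
    have "\<eta> * (g' \<sigma> - c + 1) \<le> \<eta>0 * (g' \<sigma> - c + 1)"
      using \<eta> c[OF sK'] by (intro mult_right_mono) auto
    also have "\<dots> \<le> f \<sigma> + e - A \<sigma>"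
      using \<eta>0le[OF sK'] c[OF sK'] by (simp add: le_divide_eq)
    finally have h3: "\<eta> * (g' \<sigma> - c + 1) \<le> f \<sigma> + e - A \<sigma>" .
    have "\<eta> * (g' \<sigma> - c + 1) = \<eta> * (g' \<sigma> - c) + \<eta>" by (simp add: distrib_left)
    then have h2: "\<eta> * (g' \<sigma> - c) \<le> f \<sigma> + e - A \<sigma>" using h3 \<eta> by simp
    show "\<bar>f \<sigma> - g \<sigma>\<bar> \<le> e" using P1[of \<sigma>] h1 h2 unfolding g_def by linarith
  qed
  ultimately have "inj_perturbation K f e g" unfolding inj_perturbation_def by auto
  moreover have "\<forall>i<m. \<forall>j<m. i < j \<longrightarrow> g (s (\<pi> i)) < g (s (\<pi> j))"
  proof (intro allI impI)
    fix i j assume ij: "i < m" "j < m" "i < j"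
    have pi: "\<pi> i < m" "\<pi> j < m" using permutes_in_image[OF perm, of i] permutes_in_image[OF perm, of j] ij by auto
    have lt: "g' (s (\<pi> i)) < g' (s (\<pi> j))" using ord ij by auto
    have inS: "s (\<pi> i) \<in> S" "s (\<pi> j) \<in> S" using pi S_def by auto
    have "A (s (\<pi> i)) \<le> A (s (\<pi> j))" using P4[OF inS lt] .
    then show "g (s (\<pi> i)) < g (s (\<pi> j))" unfolding g_def using lt \<eta>
      by (smt (verit) greaterThanLessThan_iff mult_strict_left_mono)
  qed
  ultimately show "\<pi> \<in> Pi_perm K f m s e" unfolding Pi_perm_def using perm by blast
qed


theorem lemma3p2:
  fixes K :: "'v::linorder set set" and f :: "'v set \<Rightarrow> real"
    and n m :: nat and s :: "nat \<Rightarrow> 'v set"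
    and \<alpha> :: "'v set \<Rightarrow> 'k::field" and a b t :: real
  assumes "simplicial_complex K" and "finite K"
    and "filtration_function K f" and "inj_on f K"
    and "n > 0"
    and "is_cycle (sublevel K f a) n \<alpha>"
    and "\<not> is_boundary (sublevel K f a) n \<alpha>"
    and "birth K f n a \<alpha> = a"
    and "death_scales K f n a \<alpha> \<noteq> {}"
    and "termination_scale K f n a \<alpha> = b"
    and "a < b"
    and "bij_betw s {..<m} (simplices K (Suc n))"
    and "t \<in> {0<..(b - a) / 2}"
    and "\<not> (\<exists>\<delta>>0. \<forall>\<epsilon>\<in>{0<..(b - a) / 2}. \<bar>\<epsilon> - t\<bar> < \<delta> \<longrightarrow> Pi_perm K f m s \<epsilon> = Pi_perm K f m s t)"
  shows "\<exists>i<m. \<exists>j<m. i \<noteq> j \<and> 2 * t = \<bar>f (s i) - f (s j)\<bar>"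
proof (rule ccontr)
  assume H: "\<not> (\<exists>i<m. \<exists>j<m. i \<noteq> j \<and> 2 * t = \<bar>f (s i) - f (s j)\<bar>)"
  have bij: "bij_betw s {..<m} (simplices K (Suc n))" using assms by simp
  have sK: "\<forall>i<m. s i \<in> K" using bij_betw_imp_surj_on[OF bij] unfolding simplices_def by auto
  have sinj: "inj_on s {..<m}" using bij_betw_imp_inj_on[OF bij] .
  have finK: "finite K" and ff: "filtration_function K f" using assms by auto
  have tpos: "t > 0" and tle: "t \<le> (b - a) / 2" using assms by auto
  define D where "D = (\<lambda>(i,j). \<bar>f (s i) - f (s j)\<bar>) ` {(i,j). i < m \<and> j < m \<and> i \<noteq> j}"
  have "{(i,j). i < m \<and> j < m \<and> i \<noteq> j} \<subseteq> {..<m} \<times> {..<m}" by auto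
  hence finD: "finite D" unfolding D_def by (meson finite_SigmaI finite_imageI finite_lessThan finite_subset)
  have Dne: "d \<noteq> 2 * t" if "d \<in> D" for d using that H unfolding D_def by (auto, metis)
  define \<delta> where "\<delta> = Min (insert 1 ((\<lambda>d. \<bar>d - 2 * t\<bar> / 2) ` D))"
  have \<delta>pos: "\<delta> > 0" unfolding \<delta>_def using finD Dne by auto
  have \<delta>le: "2 * \<delta> \<le> \<bar>d - 2 * t\<bar>" if "d \<in> D" for d
  proof -
    have "\<delta> \<le> \<bar>d - 2 * t\<bar> / 2" unfolding \<delta>_def using finD that by (intro Min_le) auto
    then show ?thesis by simp
  qed
  have inD: "\<bar>f (s i) - f (s j)\<bar> \<in> D" if "i < m" "j < m" "i \<noteq> j" for i j
    unfolding D_def using that by (auto intro!: image_eqI[where x="(i,j)"])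
  have "\<exists>\<delta>>0. \<forall>\<epsilon>\<in>{0<..(b - a) / 2}. \<bar>\<epsilon> - t\<bar> < \<delta> \<longrightarrow> Pi_perm K f m s \<epsilon> = Pi_perm K f m s t"
  proof (intro exI[of _ \<delta>] conjI ballI impI)
    show "\<delta> > 0" by (rule \<delta>pos)
    fix \<epsilon> assume e: "\<epsilon> \<in> {0<..(b - a) / 2}" "\<bar>\<epsilon> - t\<bar> < \<delta>"
    show "Pi_perm K f m s \<epsilon> = Pi_perm K f m s t"
    proof (cases "\<epsilon> \<le> t")
      case True
      have "Pi_perm K f m s t \<subseteq> Pi_perm K f m s \<epsilon>"
      proof (rule Pi_perm_shrink[OF finK ff sK sinj])
        show "\<epsilon> > 0" using e by auto
        show "\<forall>i<m. \<forall>j<m. i \<noteq> j \<longrightarrow> \<bar>f (s i) - f (s j)\<bar> < 2*t \<longrightarrow> \<bar>f (s i) - f (s j)\<bar> < 2*\<epsilon>"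
        proof (intro allI impI)
          fix i j assume "i < m" "j < m" "i \<noteq> j" "\<bar>f (s i) - f (s j)\<bar> < 2*t"
          moreover have "2 * \<delta> \<le> \<bar>\<bar>f (s i) - f (s j)\<bar> - 2 * t\<bar>" using \<delta>le inD calculation by blast
          ultimately show "\<bar>f (s i) - f (s j)\<bar> < 2*\<epsilon>" using e by linarith
        qed
      qed
      then show ?thesis using Pi_perm_mono[OF True] by blast
    next
      case False
      have "Pi_perm K f m s \<epsilon> \<subseteq> Pi_perm K f m s t"
      proof (rule Pi_perm_shrink[OF finK ff sK sinj tpos])
        show "\<forall>i<m. \<forall>j<m. i \<noteq> j \<longrightarrow> \<bar>f (s i) - f (s j)\<bar> < 2*\<epsilon> \<longrightarrow> \<bar>f (s i) - f (s j)\<bar> < 2*t"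
        proof (intro allI impI)
          fix i j assume "i < m" "j < m" "i \<noteq> j" "\<bar>f (s i) - f (s j)\<bar> < 2*\<epsilon>"
          moreover have "2 * \<delta> \<le> \<bar>\<bar>f (s i) - f (s j)\<bar> - 2 * t\<bar>" using \<delta>le inD calculation by blast
          ultimately show "\<bar>f (s i) - f (s j)\<bar> < 2*t" using e by linarith
        qed
      qed
      then show ?thesis using Pi_perm_mono[of t \<epsilon> K f m s] False by auto
    qed
  qed
  then show False using assms(14) by blast
qed
end
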